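(* Let $K$ be a uniformly bounded strictly positive definite kernel on ${\mathscr X}$, $\mu$ a probability measure on ${\mathscr X}$, $r=(r_0,\dots,r_p)^T$ bounded measurable functions with $r_0\equiv1$ and $\mathbf M_r=\int r\,r^T\,d\mu$ nonsingular, and $x_1,\dots,x_n\in{\mathscr X}$ pairwise distinct. Take $h=r$, so $\mathbf H_n=\mathbf R_n$ and $\mathbf B(\mu)=\mathbf M_r$. Assume $\mathbf R_n$ has full column rank and $\widetilde{\mathbf K}_n$ is nonsingular. Then for every $y\in\mathbb{R}^n$, with $\widehat{\mathbf I}_n$ and $\mathbf V_n$ as defined in the context, $$\widehat{\mathbf I}_n=\mathbf M_r(\mathbf R_n^T\widetilde{\mathbf K}_n^{-1}\mathbf R_n)^{-1}\mathbf R_n^T\widetilde{\mathbf K}_n^{-1}y,\qquad \mathbf V_n=\mathbf M_r(\mathbf R_n^T\widetilde{\mathbf K}_n^{-1}\mathbf R_n)^{-1}\mathbf M_r.$$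
   Context: ${\mathscr X}$ is a nonempty measurable space; $K:{\mathscr X}\times{\mathscr X}\to\mathbb{R}$ is symmetric, measurable, uniformly bounded ($\sup|K|<\infty$) and strictly positive definite ($\mathbf K_n=(K(x_i,x_j))_{i,j}$ positive definite for pairwise distinct points). Let $\mathbf R_n=(r_j(x_i))_{i=1..n,\,j=0..p}$, $\mathbf k_n(x)=(K(x,x_1),\dots,K(x,x_n))^T$, $\mathbf P_n(\mu)=\int r(x)\mathbf k_n^T(x)\,d\mu(x)$ ($(p+1)\times n$), $\mathbf U(\mu)=\int\int r(x)r^T(x')K(x,x')\,d\mu(x)\,d\mu(x')$, $\hat\beta=(\mathbf R_n^T\mathbf K_n^{-1}\mathbf R_n)^{-1}\mathbf R_n^T\mathbf K_n^{-1}y$, $\widehat{\mathbf I}_n=\mathbf M_r\hat\beta+\mathbf P_n(\mu)\mathbf K_n^{-1}(y-\mathbf R_n\hat\beta)$, and $\mathbf V_n=\mathbf U(\mu)-\mathbf P_n(\mu)\mathbf K_n^{-1}\mathbf P_n^T(\mu)+[\mathbf M_r-\mathbf P_n(\mu)\mathbf K_n^{-1}\mathbf R_n](\mathbf R_n^T\mathbf K_n^{-1}\mathbf R_n)^{-1}[\mathbf M_r-\mathbf P_n(\mu)\mathbf K_n^{-1}\mathbf R_n]^T$. With $\mathbf u_\mu(x)=\int r(x')K(x',x)\,d\mu(x')$, the reduced kernel is $K_\mu(x,x')=K(x,x')-\mathbf u_\mu^T(x)\mathbf M_r^{-1}r(x')-r^T(x)\mathbf M_r^{-1}\mathbf u_\mu(x')+r^T(x)\mathbf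 M_r^{-1}\mathbf U(\mu)\mathbf M_r^{-1}r(x')$, and $\widetilde{\mathbf K}_n=(K_\mu(x_i,x_j))_{i,j=1}^n$. *)

theory Defs
  imports "HOL-Probability.Probability"
begin

definition spd_kernel :: "'a measure \<Rightarrow> ('a \<Rightarrow> 'a \<Rightarrow> real) \<Rightarrow> bool" where
  "spd_kernel M K \<longleftrightarrow>
     (\<forall>F c. finite F \<and> F \<subseteq> space M \<and> (\<exists>x\<in>F. c x \<noteq> (0::real)) \<longrightarrow>
        (\<Sum>x\<in>F. \<Sum>y\<in>F. c x * c y * K x y) > 0)"

definition Kmat :: "('a \<Rightarrow> 'a \<Rightarrow> real) \<Rightarrow> ('n::finite \<Rightarrow> 'a) \<Rightarrow> real^'n^'n" where
  "Kmat K xs = (\<chi> i j. K (xs i) (xs j))"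

definition Rmat :: "('a \<Rightarrow> real^'p::finite) \<Rightarrow> ('n::finite \<Rightarrow> 'a) \<Rightarrow> real^'p^'n" where
  "Rmat r xs = (\<chi> i j. r (xs i) $ j)"

definition Mr :: "'a measure \<Rightarrow> ('a \<Rightarrow> real^'p::finite) \<Rightarrow> real^'p^'p" where
  "Mr M r = (\<chi> j k. integral\<^sup>L M (\<lambda>x. r x $ j * r x $ k))"

definition Pmat :: "'a measure \<Rightarrow> ('a \<Rightarrow> 'a \<Rightarrow> real) \<Rightarrow> ('a \<Rightarrow> real^'p::finite) \<Rightarrow> ('n::finite \<Rightarrow> 'a) \<Rightarrow> real^'n^'p" where
  "Pmat M K r xs = (\<chi> j i. integral\<^sup>L M (\<lambda>x. r x $ j * K x (xs i)))"

definition Umat :: "'a measure \<Rightarrow> ('a \<Rightarrow> 'a \<Rightarrow> real) \<Rightarrow> ('a \<Rightarrow> real^'p::finite) \<Rightarrow> real^'p^'p" where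
  "Umat M K r = (\<chi> j k. integral\<^sup>L M (\<lambda>x. integral\<^sup>L M (\<lambda>x'. r x $ j * r x' $ k * K x x')))"

definition u_mu :: "'a measure \<Rightarrow> ('a \<Rightarrow> 'a \<Rightarrow> real) \<Rightarrow> ('a \<Rightarrow> real^'p::finite) \<Rightarrow> 'a \<Rightarrow> real^'p" where
  "u_mu M K r x = (\<chi> j. integral\<^sup>L M (\<lambda>x'. r x' $ j * K x' x))"

definition K_mu :: "'a measure \<Rightarrow> ('a \<Rightarrow> 'a \<Rightarrow> real) \<Rightarrow> ('a \<Rightarrow> real^'p::finite) \<Rightarrow> 'a \<Rightarrow> 'a \<Rightarrow> real" where
  "K_mu M K r x x' =
     K x x' - u_mu M K r x \<bullet> (matrix_inv (Mr M r) *v r x')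
            - r x \<bullet> (matrix_inv (Mr M r) *v u_mu M K r x')
            + r x \<bullet> ((matrix_inv (Mr M r) ** Umat M K r ** matrix_inv (Mr M r)) *v r x')"

definition Ktilde :: "'a measure \<Rightarrow> ('a \<Rightarrow> 'a \<Rightarrow> real) \<Rightarrow> ('a \<Rightarrow> real^'p::finite) \<Rightarrow> ('n::finite \<Rightarrow> 'a) \<Rightarrow> real^'n^'n" where
  "Ktilde M K r xs = (\<chi> i j. K_mu M K r (xs i) (xs j))"

definition beta_hat :: "('a \<Rightarrow> 'a \<Rightarrow> real) \<Rightarrow> ('a \<Rightarrow> real^'p::finite) \<Rightarrow> ('n::finite \<Rightarrow> 'a) \<Rightarrow> real^'n \<Rightarrow> real^'p" where
  "beta_hat K r xs y =
     matrix_inv (transpose (Rmat r xs) ** matrix_inv (Kmat K xs) ** Rmat r xs)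
       *v ((transpose (Rmat r xs) ** matrix_inv (Kmat K xs)) *v y)"

definition I_hat :: "'a measure \<Rightarrow> ('a \<Rightarrow> 'a \<Rightarrow> real) \<Rightarrow> ('a \<Rightarrow> real^'p::finite) \<Rightarrow> ('n::finite \<Rightarrow> 'a) \<Rightarrow> real^'n \<Rightarrow> real^'p" where
  "I_hat M K r xs y =
     Mr M r *v beta_hat K r xs y
     + (Pmat M K r xs ** matrix_inv (Kmat K xs)) *v (y - Rmat r xs *v beta_hat K r xs y)"

definition V_n :: "'a measure \<Rightarrow> ('a \<Rightarrow> 'a \<Rightarrow> real) \<Rightarrow> ('a \<Rightarrow> real^'p::finite) \<Rightarrow> ('n::finite \<Rightarrow> 'a) \<Rightarrow> real^'p^'p" where
  "V_n M K r xs =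
     Umat M K r - Pmat M K r xs ** matrix_inv (Kmat K xs) ** transpose (Pmat M K r xs)
     + (Mr M r - Pmat M K r xs ** matrix_inv (Kmat K xs) ** Rmat r xs)
       ** matrix_inv (transpose (Rmat r xs) ** matrix_inv (Kmat K xs) ** Rmat r xs)
       ** transpose (Mr M r - Pmat M K r xs ** matrix_inv (Kmat K xs) ** Rmat r xs)"

end

theory Submission
  imports Defs
begin

lemma minv: "invertible (A::real^'n^'n) \<Longrightarrow> A ** matrix_inv A = mat 1 \<and> matrix_inv A ** A = mat 1"
  unfolding invertible_def matrix_inv_def by (rule someI_ex)

lemma minv_unique:
  fixes A B :: "real^'n^'n"
  assumes "B ** A = mat 1" shows "matrix_inv A = B" "invertible A"
proof -
  have AB: "A ** B = mat 1" using assms matrix_left_right_inverse by blast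
  show inv: "invertible A" unfolding invertible_def using assms AB by blast
  have "matrix_inv A = matrix_inv A ** (A ** B)" using AB by simp
  also have "\<dots> = B" by (simp add: matrix_mul_assoc minv[OF inv])
  finally show "matrix_inv A = B" .
qed

lemma minv_sym:
  fixes A :: "real^'n^'n"
  assumes "invertible A" "transpose A = A"
  shows "transpose (matrix_inv A) = matrix_inv A"
proof -
  have "transpose (matrix_inv A) ** A = mat 1"
    by (metis assms matrix_transpose_mul minv transpose_mat)
  then show ?thesis using minv_unique by metis
qed

lemma mm_rdistrib: "((A::'a::ring_1^'n^'m) + B) ** C = A ** C + B ** C"
  by (vector matrix_matrix_mult_def sum.distrib[symmetric] field_simps)
lemma mm_sub_rdistrib: "((A::'a::ring_1^'n^'m) - B) ** C = A ** C - B ** C"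
  by (vector matrix_matrix_mult_def sum_subtractf[symmetric] field_simps)
lemma mm_sub_ldistrib: "(A::'a::ring_1^'n^'m) ** (B - C) = A ** B - A ** C"
  by (vector matrix_matrix_mult_def sum_subtractf[symmetric] field_simps)
lemma tr_add: "transpose ((A::'a::ring_1^'n^'m) + B) = transpose A + transpose B"
  by (vector transpose_def)
lemma tr_sub: "transpose ((A::'a::ring_1^'n^'m) - B) = transpose A - transpose B"
  by (vector transpose_def)

lemma core:
  fixes K :: "real^'n^'n" and R :: "real^'p^'n" and P :: "real^'n^'p" and M U :: "real^'p^'p"
  assumes Minv: "invertible M" and Msym: "transpose M = M"
    and Kinv: "invertible K" and Ksym: "transpose K = K"
    and Binv: "invertible (transpose R ** matrix_inv K ** R)"
    and Ktinv: "invertible Kt"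
    and Kt: "Kt = K - transpose P ** matrix_inv M ** transpose R - R ** matrix_inv M ** P
                + R ** (matrix_inv M ** U ** matrix_inv M) ** transpose R"
  shows "(M ** matrix_inv (transpose R ** matrix_inv K ** R) ** (transpose R ** matrix_inv K)
            + P ** matrix_inv K - P ** matrix_inv K ** R ** matrix_inv (transpose R ** matrix_inv K ** R) ** (transpose R ** matrix_inv K))
         = M ** matrix_inv (transpose R ** matrix_inv Kt ** R) ** transpose R ** matrix_inv Kt
       \<and> U - P ** matrix_inv K ** transpose P
     + (M - P ** matrix_inv K ** R)
       ** matrix_inv (transpose R ** matrix_inv K ** R)
       ** transpose (M - P ** matrix_inv K ** R)
       = M ** matrix_inv (transpose R ** matrix_inv Kt ** R) ** M"
proof -
  define Ki where "Ki = matrix_inv K"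
  define A where "A = matrix_inv M"
  define Bi where "Bi = matrix_inv (transpose R ** Ki ** R)"
  define Kti where "Kti = matrix_inv Kt"
  have KiT: "transpose Ki = Ki" unfolding Ki_def using minv_sym Kinv Ksym by blast
  have c1: "X ** K ** Ki = X" "X ** Ki ** K = X" "K ** Ki = mat 1" "Ki ** K = mat 1" for X :: "real^'n^'q"
    using minv[OF Kinv] by (simp_all add: Ki_def flip: matrix_mul_assoc)
  have c2: "X ** M ** A = X" "X ** A ** M = X" "M ** A = mat 1" "A ** M = mat 1" for X :: "real^'p^'q"
    using minv[OF Minv] by (simp_all add: A_def flip: matrix_mul_assoc)
  have c3: "X ** transpose R ** Ki ** R ** Bi = X" "X ** Bi ** transpose R ** Ki ** R = X" for X :: "real^'p^'q"
    using minv[OF Binv] by (simp_all add: Bi_def Ki_def flip: matrix_mul_assoc)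
  have c4: "X ** Kt ** Kti = X" "X ** Kti ** Kt = X" for X :: "real^'n^'q"
    using minv[OF Ktinv] by (simp_all add: Kti_def flip: matrix_mul_assoc)
  define L where "L = M ** Bi ** transpose R ** Ki + P ** Ki - P ** Ki ** R ** Bi ** transpose R ** Ki"
  define V where "V = U - P ** Ki ** transpose P + (M - P ** Ki ** R) ** Bi ** (M - transpose R ** Ki ** transpose P)"
  have LR: "L ** R = M"
    unfolding L_def by (simp add: mm_rdistrib mm_sub_rdistrib c1 c2 c3)
  have LK: "L ** Kt = V ** A ** transpose R"
    unfolding L_def V_def Kt A_def[symmetric] Ki_def[symmetric]
    by (simp add: mm_rdistrib mm_sub_rdistrib mm_sub_ldistrib matrix_add_ldistrib matrix_mul_assoc c1 c2 c3 algebra_simps)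
  have L2: "L = V ** A ** transpose R ** Kti"
    by (metis LK c4(1))
  have "A ** V ** A ** (transpose R ** Kti ** R) = mat 1"
    using LR L2 c2 by (metis matrix_mul_assoc)
  then have XI: "matrix_inv (transpose R ** Kti ** R) = A ** V ** A"
    by (rule minv_unique)
  have VT: "transpose (M - P ** matrix_inv K ** R) = M - transpose R ** Ki ** transpose P"
    by (simp add: tr_sub matrix_transpose_mul KiT Msym Ki_def[symmetric] matrix_mul_assoc)
  have e1: "M ** matrix_inv (transpose R ** matrix_inv K ** R) ** (transpose R ** matrix_inv K)
            + P ** matrix_inv K - P ** matrix_inv K ** R ** matrix_inv (transpose R ** matrix_inv K ** R) ** (transpose R ** matrix_inv K) = L"
    by (simp add: L_def Bi_def Ki_def matrix_mul_assoc)
  have e2: "U - P ** matrix_inv K ** transpose P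
     + (M - P ** matrix_inv K ** R)
       ** matrix_inv (transpose R ** matrix_inv K ** R)
       ** transpose (M - P ** matrix_inv K ** R) = V"
    unfolding VT by (simp add: V_def Bi_def Ki_def)
  have e3: "M ** (A ** V ** A) ** transpose R ** Kti = L"
    by (simp add: matrix_mul_assoc c2 L2)
  have e4: "M ** (A ** V ** A) ** M = V"
    by (simp add: matrix_mul_assoc c2)
  show ?thesis
    unfolding Kti_def[symmetric] XI e1 e2 e3 e4 by simp
qed

lemma quad_lemma: "(x::real^'n) \<bullet> (G *v y) = (\<Sum>l\<in>UNIV. \<Sum>k\<in>UNIV. x$l * G$l$k * y$k)"
  by (simp add: inner_vec_def matrix_vector_mult_def sum_distrib_left mult.assoc)

lemma mm3: "((X::real^'l^'m) ** (G::real^'k^'l) ** (Y::real^'j^'k)) $ i $ j = (\<Sum>l\<in>UNIV. \<Sum>k\<in>UNIV. X$i$l * G$l$k * Y$k$j)"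
  apply (simp add: matrix_matrix_mult_def sum_distrib_left sum_distrib_right mult.assoc)
  apply (subst sum.swap) by simp

lemma Ktilde_eq:
  "Ktilde M K r xs = Kmat K xs - transpose (Pmat M K r xs) ** matrix_inv (Mr M r) ** transpose (Rmat r xs)
     - Rmat r xs ** matrix_inv (Mr M r) ** Pmat M K r xs
     + Rmat r xs ** (matrix_inv (Mr M r) ** Umat M K r ** matrix_inv (Mr M r)) ** transpose (Rmat r xs)"
  unfolding vec_eq_iff
  by (simp add: Ktilde_def K_mu_def Kmat_def quad_lemma mm3 transpose_def Rmat_def u_mu_def Pmat_def)

lemma Kmat_pos:
  fixes xs :: "'n::finite \<Rightarrow> 'a"
  assumes spd: "spd_kernel M K" and xs_in: "\<forall>i. xs i \<in> space M" and inj: "inj xs"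
    and z: "z \<noteq> 0"
  shows "z \<bullet> (Kmat K xs *v z) > 0"
proof -
  define c where "c x = z $ inv xs x" for x
  obtain i where i: "z $ i \<noteq> 0" using z by (metis vec_eq_iff zero_index)
  have "(\<Sum>x\<in>range xs. \<Sum>y\<in>range xs. c x * c y * K x y) > 0"
    using spd unfolding spd_kernel_def
    apply (elim allE[of _ "range xs"] allE[of _ c])
    using xs_in i by (force simp: c_def inv_f_f[OF inj])
  also have "(\<Sum>x\<in>range xs. \<Sum>y\<in>range xs. c x * c y * K x y)
      = (\<Sum>i\<in>UNIV. \<Sum>j\<in>UNIV. z$i * z$j * K (xs i) (xs j))"
    by (simp add: sum.reindex[OF inj_on_subset[OF inj]] c_def inv_f_f[OF inj])
  also have "\<dots> = z \<bullet> (Kmat K xs *v z)"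
    by (simp add: quad_lemma Kmat_def mult_ac)
  finally show ?thesis .
qed

lemma inv_from_ker:
  fixes A :: "real^'n^'n"
  assumes "\<And>x. A *v x = 0 \<Longrightarrow> x = 0" shows "invertible A"
  using assms invertible_left_inverse matrix_left_invertible_ker by blast

theorem lemmaB1:
  fixes M :: "'a measure" and K :: "'a \<Rightarrow> 'a \<Rightarrow> real"
    and r :: "'a \<Rightarrow> real^'p::finite" and i0 :: 'p
    and xs :: "'n::finite \<Rightarrow> 'a" and y :: "real^'n"
  assumes prob: "prob_space M"
    and K_sym: "\<forall>x\<in>space M. \<forall>x'\<in>space M. K x x' = K x' x"
    and K_meas: "(\<lambda>(x, x'). K x x') \<in> borel_measurable (M \<Otimes>\<^sub>M M)"
    and K_bdd: "\<exists>B. \<forall>x\<in>space M. \<forall>x'\<in>space M. \<bar>K x x'\<bar> \<le> B"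
    and K_spd: "spd_kernel M K"
    and r_meas: "\<forall>j. (\<lambda>x. r x $ j) \<in> borel_measurable M"
    and r_bdd: "\<exists>B. \<forall>x\<in>space M. \<forall>j. \<bar>r x $ j\<bar> \<le> B"
    and r0: "\<forall>x\<in>space M. r x $ i0 = 1"
    and Mr_inv: "invertible (Mr M r)"
    and xs_in: "\<forall>i. xs i \<in> space M"
    and xs_inj: "inj xs"
    and R_rank: "rank (Rmat r xs) = CARD('p)"
    and Kt_inv: "invertible (Ktilde M K r xs)"
  shows "I_hat M K r xs y =
           (Mr M r ** matrix_inv (transpose (Rmat r xs) ** matrix_inv (Ktilde M K r xs) ** Rmat r xs)
             ** transpose (Rmat r xs) ** matrix_inv (Ktilde M K r xs)) *v y
       \<and> V_n M K r xs =
           Mr M r ** matrix_inv (transpose (Rmat r xs) ** matrix_inv (Ktilde M K r xs) ** Rmat r xs)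
             ** Mr M r"
  
proof -
  let ?K = "Kmat K xs" and ?R = "Rmat r xs" and ?P = "Pmat M K r xs" and ?M = "Mr M r"
  have Msym: "transpose ?M = ?M"
    unfolding vec_eq_iff by (simp add: transpose_def Mr_def mult.commute)
  have Ksym: "transpose ?K = ?K"
    unfolding vec_eq_iff using K_sym xs_in by (simp add: transpose_def Kmat_def)
  have Kinv: "invertible ?K"
    by (rule inv_from_ker) (metis Kmat_pos[OF K_spd xs_in xs_inj] inner_zero_right less_irrefl)
  have Binv: "invertible (transpose ?R ** matrix_inv ?K ** ?R)"
  proof (rule inv_from_ker)
    fix v assume Bv: "(transpose ?R ** matrix_inv ?K ** ?R) *v v = 0"
    define w where "w = ?R *v v"
    define z where "z = matrix_inv ?K *v w"
    have wz: "w = ?K *v z" unfolding z_def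
      by (simp add: matrix_vector_mul_assoc minv[OF Kinv])
    have "0 = v \<bullet> ((transpose ?R ** matrix_inv ?K ** ?R) *v v)" using Bv by simp
    also have "\<dots> = v \<bullet> (transpose ?R *v z)"
      by (simp add: w_def z_def matrix_vector_mul_assoc matrix_mul_assoc)
    also have "\<dots> = (z v* ?R) \<bullet> v" by (metis inner_commute transpose_matrix_vector)
    also have "\<dots> = w \<bullet> z"
      by (metis dot_lmul_matrix w_def inner_commute)
    also have "\<dots> = z \<bullet> (?K *v z)" by (simp add: wz inner_commute)
    finally have "z = 0" using Kmat_pos[OF K_spd xs_in xs_inj, of z] by force
    then have "?R *v v = 0" using wz w_def by simp
    then show "v = 0"
      using R_rank full_rank_injective[of ?R] by (metis inj_eq matrix_vector_mult_0_right)
  qed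
  note C = core[OF Mr_inv Msym Kinv Ksym Binv Kt_inv Ktilde_eq]
  have Ieq: "I_hat M K r xs y =
     (?M ** matrix_inv (transpose ?R ** matrix_inv ?K ** ?R) ** (transpose ?R ** matrix_inv ?K)
            + ?P ** matrix_inv ?K - ?P ** matrix_inv ?K ** ?R ** matrix_inv (transpose ?R ** matrix_inv ?K ** ?R) ** (transpose ?R ** matrix_inv ?K)) *v y"
    unfolding I_hat_def beta_hat_def
    by (simp add: matrix_vector_mult_add_rdistrib matrix_vector_mult_diff_rdistrib
        matrix_vector_mult_diff_distrib flip: matrix_vector_mul_assoc)
  show ?thesis using C unfolding Ieq V_n_def by simp
qed

end
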